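(* Consider the setting described in the context. If $Q_{t,k}\ge0$, $R_{t,k}>0$ and $G_t\ge0$ for all $k\in\mathbb{T}_t$, $t\in\mathbb{T}$, then Problem (LQ) admits a unique linear feedback equilibrium strategy $\Phi$.
   Context: Let $N$ be a positive integer, $\mathbb{T}=\{0,1,\dots,N-1\}$, $\mathbb{T}_t=\{t,\dots,N-1\}$. On a probability space $(\Omega,\mathcal{F},P)$, $\{w_k\}$ is a scalar martingale difference sequence with $\mathbb{E}[w_{k+1}\mid\mathcal{F}_k]=0$ and $\mathbb{E}[w_{k+1}^2\mid\mathcal{F}_k]=1$ for $k\ge0$, where $\mathcal{F}_k=\sigma\{x_0,w_l,\ l=0,\dots,k\}$ and $\mathcal{F}_{-1}=\{\emptyset,\Omega\}$. $L^2_{\mathcal{F}}(\mathbb{T}_t;\mathbb{R}^m)$ is the set of $\mathbb{R}^m$-valued processes $\{\nu_k,k\in\mathbb{T}_t\}$ with each $\nu_k$ $\mathcal{F}_{k-1}$-measurable and $\sum_k\mathbb{E}|\nu_k|^2<\infty$; $L^2_{\mathcal{F}}(k;\mathcal{H})$ is the set of square-integrable $\mathcal{F}_{k-1}$-measurable $\mathcal{H}$-valued random variables. For each $t\in\mathbb{T}$, $k\in\mathbb{T}_t$, let $A_{t,k},C_{t,k}\in\mathbb{R}^{n\times n}$, $B_{t,k},D_{t,k}\in\mathbb{R}^{n\times m}$ be deterministic and $Q_{t,k}\in\mathbb{R}^{n\times n}$, $R_{t,k}\in\mathbb{R}^{m\times m}$, $G_t\in\mathbb{R}^{n\times n}$ deterministic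 symmetric. For $t\in\mathbb{T}$, $y\in L^2_{\mathcal{F}}(t;\mathbb{R}^n)$, $u\in L^2_{\mathcal{F}}(\mathbb{T}_t;\mathbb{R}^m)$, the state $X^t$ solves $X^t_{k+1}=A_{t,k}X^t_k+B_{t,k}u_k+(C_{t,k}X^t_k+D_{t,k}u_k)w_k$, $X^t_t=y$, and $J(t,y;u)=\sum_{k=t}^{N-1}\mathbb{E}[(X^t_k)^TQ_{t,k}X^t_k+u_k^TR_{t,k}u_k]+\mathbb{E}[(X^t_N)^TG_tX^t_N]$ (Problem (LQ) is to minimize it). $\Phi=\{\Phi_0,\dots,\Phi_{N-1}\}$, $\Phi_t\in\mathbb{R}^{m\times n}$, is a linear feedback equilibrium strategy of Problem (LQ) if for every $(t,x)\in\mathbb{T}\times\mathbb{R}^n$, $k\in\mathbb{T}_t$ and $u_k\in L^2_{\mathcal{F}}(k;\mathbb{R}^m)$, $$J\big(k,X^{t,x,*}_k;(\Phi_\ell X^{k,\Phi}_\ell)_{\ell\in\mathbb{T}_k}\big)\le J\big(k,X^{t,x,*}_k;(u_k,(\Phi_\ell X^{k,u_k,\Phi}_\ell)_{\ell\in\mathbb{T}_{k+1}})\big),$$ where $X^{t,x,*}_{k+1}=(A_{k,k}+B_{k,k}\Phi_k)X^{t,x,*}_k+(C_{k,k}+D_{k,k}\Phi_k)X^{t,x,*}_kw_k$, $X^{t,x,*}_t=x$; $X^{k,\Phi}_{\ell+1}=(A_{k,\ell}+B_{k,\ell}\Phi_\ell)X^{k,\Phi}_\ell+(C_{k,\ell}+D_{k,\ell}\Phi_\ell)X^{k,\Phi}_\ell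 w_\ell$ ($\ell\in\mathbb{T}_k$), $X^{k,\Phi}_k=X^{t,x,*}_k$; and $X^{k,u_k,\Phi}_k=X^{t,x,*}_k$, $X^{k,u_k,\Phi}_{k+1}=A_{k,k}X^{k,u_k,\Phi}_k+B_{k,k}u_k+(C_{k,k}X^{k,u_k,\Phi}_k+D_{k,k}u_k)w_k$, $X^{k,u_k,\Phi}_{\ell+1}=(A_{k,\ell}+B_{k,\ell}\Phi_\ell)X^{k,u_k,\Phi}_\ell+(C_{k,\ell}+D_{k,\ell}\Phi_\ell)X^{k,u_k,\Phi}_\ell w_\ell$ for $\ell\in\mathbb{T}_{k+1}$. *)

theory Defs
  imports "HOL-Analysis.Analysis" "HOL-Probability.Probability"
begin

definition psd_mat :: "real^'n^'n \<Rightarrow> bool" where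
  "psd_mat P \<longleftrightarrow> (\<forall>x. 0 \<le> x \<bullet> (P *v x))"

definition pd_mat :: "real^'n^'n \<Rightarrow> bool" where
  "pd_mat P \<longleftrightarrow> (\<forall>x. x \<noteq> 0 \<longrightarrow> 0 < x \<bullet> (P *v x))"

text \<open>Filtration: Ffilt k = F_k = sigma{x0, w_0..w_k}; Fpre k = F_(k-1), with F_(-1) trivial.\<close>
definition Ffilt :: "'w measure \<Rightarrow> ('w \<Rightarrow> 'a::topological_space) \<Rightarrow> (nat \<Rightarrow> 'w \<Rightarrow> real) \<Rightarrow> nat \<Rightarrow> 'w measure" where
  "Ffilt M x0 w k = sigma (space M)
     ({x0 -` S \<inter> space M | S. S \<in> sets borel} \<union>
      (\<Union>l\<in>{..k}. {w l -` S \<inter> space M | S. S \<in> sets borel}))"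

definition Fpre :: "'w measure \<Rightarrow> ('w \<Rightarrow> 'a::topological_space) \<Rightarrow> (nat \<Rightarrow> 'w \<Rightarrow> real) \<Rightarrow> nat \<Rightarrow> 'w measure" where
  "Fpre M x0 w k = (if k = 0 then sigma (space M) {} else Ffilt M x0 w (k - 1))"

text \<open>State of system t started at time t with (random) value y under control process u;
  stateX ... t y u j is X^t_(t+j).\<close>
fun stateX :: "(nat \<Rightarrow> nat \<Rightarrow> real^'n^'n) \<Rightarrow> (nat \<Rightarrow> nat \<Rightarrow> real^'m^'n) \<Rightarrow>
    (nat \<Rightarrow> nat \<Rightarrow> real^'n^'n) \<Rightarrow> (nat \<Rightarrow> nat \<Rightarrow> real^'m^'n) \<Rightarrow> (nat \<Rightarrow> 'w \<Rightarrow> real) \<Rightarrow>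
    nat \<Rightarrow> ('w \<Rightarrow> real^'n) \<Rightarrow> (nat \<Rightarrow> 'w \<Rightarrow> real^'m) \<Rightarrow> nat \<Rightarrow> 'w \<Rightarrow> real^'n" where
  "stateX A B C D w t y u 0 \<omega> = y \<omega>"
| "stateX A B C D w t y u (Suc j) \<omega> =
     (let k = t + j; x = stateX A B C D w t y u j \<omega>; c = u k \<omega> in
      A t k *v x + B t k *v c + w k \<omega> *\<^sub>R (C t k *v x + D t k *v c))"

definition costJ :: "'w measure \<Rightarrow> nat \<Rightarrow> (nat \<Rightarrow> nat \<Rightarrow> real^'n^'n) \<Rightarrow> (nat \<Rightarrow> nat \<Rightarrow> real^'m^'n) \<Rightarrow>
    (nat \<Rightarrow> nat \<Rightarrow> real^'n^'n) \<Rightarrow> (nat \<Rightarrow> nat \<Rightarrow> real^'m^'n) \<Rightarrow>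
    (nat \<Rightarrow> nat \<Rightarrow> real^'n^'n) \<Rightarrow> (nat \<Rightarrow> nat \<Rightarrow> real^'m^'m) \<Rightarrow> (nat \<Rightarrow> real^'n^'n) \<Rightarrow>
    (nat \<Rightarrow> 'w \<Rightarrow> real) \<Rightarrow> nat \<Rightarrow> ('w \<Rightarrow> real^'n) \<Rightarrow> (nat \<Rightarrow> 'w \<Rightarrow> real^'m) \<Rightarrow> real" where
  "costJ M N A B C D Q R G w t y u =
     (\<Sum>k\<in>{t..<N}. integral\<^sup>L M (\<lambda>\<omega>.
         stateX A B C D w t y u (k - t) \<omega> \<bullet> (Q t k *v stateX A B C D w t y u (k - t) \<omega>)
         + u k \<omega> \<bullet> (R t k *v u k \<omega>)))
     + integral\<^sup>L M (\<lambda>\<omega>. stateX A B C D w t y u (N - t) \<omega> \<bullet> (G t *v stateX A B C D w t y u (N - t) \<omega>))"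

text \<open>X^{t,x,*}: equilibrium state started at time t from deterministic x; eqX ... t x j = X^{t,x,*}_(t+j).\<close>
fun eqX :: "(nat \<Rightarrow> nat \<Rightarrow> real^'n^'n) \<Rightarrow> (nat \<Rightarrow> nat \<Rightarrow> real^'m^'n) \<Rightarrow>
    (nat \<Rightarrow> nat \<Rightarrow> real^'n^'n) \<Rightarrow> (nat \<Rightarrow> nat \<Rightarrow> real^'m^'n) \<Rightarrow> (nat \<Rightarrow> 'w \<Rightarrow> real) \<Rightarrow>
    (nat \<Rightarrow> real^'n^'m) \<Rightarrow> nat \<Rightarrow> real^'n \<Rightarrow> nat \<Rightarrow> 'w \<Rightarrow> real^'n" where
  "eqX A B C D w \<Phi> t x 0 \<omega> = x"
| "eqX A B C D w \<Phi> t x (Suc j) \<omega> =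
     (let k = t + j; X = eqX A B C D w \<Phi> t x j \<omega> in
      (A k k + B k k ** \<Phi> k) *v X + w k \<omega> *\<^sub>R ((C k k + D k k ** \<Phi> k) *v X))"

text \<open>X^{k,\<Phi>}: closed-loop state of system k from time k with initial value y; clX ... k y j = X^{k,\<Phi>}_(k+j).\<close>
fun clX :: "(nat \<Rightarrow> nat \<Rightarrow> real^'n^'n) \<Rightarrow> (nat \<Rightarrow> nat \<Rightarrow> real^'m^'n) \<Rightarrow>
    (nat \<Rightarrow> nat \<Rightarrow> real^'n^'n) \<Rightarrow> (nat \<Rightarrow> nat \<Rightarrow> real^'m^'n) \<Rightarrow> (nat \<Rightarrow> 'w \<Rightarrow> real) \<Rightarrow>
    (nat \<Rightarrow> real^'n^'m) \<Rightarrow> nat \<Rightarrow> ('w \<Rightarrow> real^'n) \<Rightarrow> nat \<Rightarrow> 'w \<Rightarrow> real^'n" where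
  "clX A B C D w \<Phi> k y 0 \<omega> = y \<omega>"
| "clX A B C D w \<Phi> k y (Suc j) \<omega> =
     (let l = k + j; X = clX A B C D w \<Phi> k y j \<omega> in
      (A k l + B k l ** \<Phi> l) *v X + w l \<omega> *\<^sub>R ((C k l + D k l ** \<Phi> l) *v X))"

text \<open>X^{k,u_k,\<Phi>}: state of system k, control v at time k, closed loop afterwards;
  pX ... k y v j = X^{k,u_k,\<Phi>}_(k+j).\<close>
fun pX :: "(nat \<Rightarrow> nat \<Rightarrow> real^'n^'n) \<Rightarrow> (nat \<Rightarrow> nat \<Rightarrow> real^'m^'n) \<Rightarrow>
    (nat \<Rightarrow> nat \<Rightarrow> real^'n^'n) \<Rightarrow> (nat \<Rightarrow> nat \<Rightarrow> real^'m^'n) \<Rightarrow> (nat \<Rightarrow> 'w \<Rightarrow> real) \<Rightarrow>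
    (nat \<Rightarrow> real^'n^'m) \<Rightarrow> nat \<Rightarrow> ('w \<Rightarrow> real^'n) \<Rightarrow> ('w \<Rightarrow> real^'m) \<Rightarrow> nat \<Rightarrow> 'w \<Rightarrow> real^'n" where
  "pX A B C D w \<Phi> k y v 0 \<omega> = y \<omega>"
| "pX A B C D w \<Phi> k y v (Suc j) \<omega> =
     (let l = k + j; X = pX A B C D w \<Phi> k y v j \<omega> in
      if j = 0 then A k k *v X + B k k *v v \<omega> + w k \<omega> *\<^sub>R (C k k *v X + D k k *v v \<omega>)
      else (A k l + B k l ** \<Phi> l) *v X + w l \<omega> *\<^sub>R ((C k l + D k l ** \<Phi> l) *v X))"

text \<open>Linear feedback equilibrium strategy (only \<Phi>_0..\<Phi>_(N-1) are relevant).\<close>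
definition is_equilibrium :: "'w measure \<Rightarrow> nat \<Rightarrow> (nat \<Rightarrow> nat \<Rightarrow> real^'n^'n) \<Rightarrow> (nat \<Rightarrow> nat \<Rightarrow> real^'m^'n) \<Rightarrow>
    (nat \<Rightarrow> nat \<Rightarrow> real^'n^'n) \<Rightarrow> (nat \<Rightarrow> nat \<Rightarrow> real^'m^'n) \<Rightarrow>
    (nat \<Rightarrow> nat \<Rightarrow> real^'n^'n) \<Rightarrow> (nat \<Rightarrow> nat \<Rightarrow> real^'m^'m) \<Rightarrow> (nat \<Rightarrow> real^'n^'n) \<Rightarrow>
    ('w \<Rightarrow> real^'n) \<Rightarrow> (nat \<Rightarrow> 'w \<Rightarrow> real) \<Rightarrow> (nat \<Rightarrow> real^'n^'m) \<Rightarrow> bool" where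
  "is_equilibrium M N A B C D Q R G x0 w \<Phi> \<longleftrightarrow>
     (\<forall>t<N. \<forall>x. \<forall>k\<in>{t..<N}. \<forall>v::'w \<Rightarrow> real^'m.
        v \<in> borel_measurable (Fpre M x0 w k) \<and> integrable M (\<lambda>\<omega>. (norm (v \<omega>))\<^sup>2) \<longrightarrow>
        (let Y = eqX A B C D w \<Phi> t x (k - t) in
         costJ M N A B C D Q R G w k Y
           (\<lambda>l \<omega>. \<Phi> l *v clX A B C D w \<Phi> k Y (l - k) \<omega>)
         \<le> costJ M N A B C D Q R G w k Y
           (\<lambda>l \<omega>. if l = k then v \<omega> else \<Phi> l *v pX A B C D w \<Phi> k Y v (l - k) \<omega>)))"

end

theory Submission
  imports Defs
begin


lemma mv_meas[measurable]:
  fixes S :: "real^'n^'m"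
  assumes "f \<in> borel_measurable F"
  shows "(\<lambda>x. S *v f x) \<in> borel_measurable F"
proof -
  have "(\<lambda>y. S *v y) \<in> borel_measurable borel"
    by (intro borel_measurable_continuous_onI linear_continuous_on matrix_vector_mul_bounded_linear)
  from measurable_compose[OF assms this] show ?thesis by simp
qed

lemma mv_bound: obtains K :: real where "K > 0" "\<And>x. norm ((S::real^'n^'m) *v x) \<le> norm x * K"
  using bounded_linear.pos_bounded[OF matrix_vector_mul_bounded_linear[of S]] by blast

lemma sqint_add:
  fixes f g :: "'w \<Rightarrow> real^'n"
  assumes [measurable]: "f \<in> borel_measurable M" "g \<in> borel_measurable M"
    and fi: "integrable M (\<lambda>x. (norm (f x))\<^sup>2)" and gi: "integrable M (\<lambda>x. (norm (g x))\<^sup>2)"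
  shows "integrable M (\<lambda>x. (norm (f x + g x))\<^sup>2)"
proof (rule Bochner_Integration.integrable_bound[OF Bochner_Integration.integrable_add[OF integrable_mult_right[OF fi, of 2] integrable_mult_right[OF gi, of 2]]])
  show "(\<lambda>x. (norm (f x + g x))\<^sup>2) \<in> borel_measurable M" by measurable
  show "AE x in M. norm ((norm (f x + g x))\<^sup>2) \<le> norm (2 * (norm (f x))\<^sup>2 + 2 * (norm (g x))\<^sup>2)"
  proof (intro AE_I2)
    fix x
    have t: "norm (f x + g x) \<le> norm (f x) + norm (g x)" by (rule norm_triangle_ineq)
    have "(norm (f x + g x))\<^sup>2 \<le> (norm (f x) + norm (g x))\<^sup>2"
      using t by (intro power_mono) auto
    also have "\<dots> \<le> 2 * (norm (f x))\<^sup>2 + 2 * (norm (g x))\<^sup>2"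
      using sum_squares_bound[of "norm (f x)" "norm (g x)"] by (simp add: power2_eq_square algebra_simps)
    finally show "norm ((norm (f x + g x))\<^sup>2) \<le> norm (2 * (norm (f x))\<^sup>2 + 2 * (norm (g x))\<^sup>2)"
      by simp
  qed
qed

lemma sqint_mat:
  fixes f :: "'w \<Rightarrow> real^'n" and S :: "real^'n^'m"
  assumes [measurable]: "f \<in> borel_measurable M"
    and fi: "integrable M (\<lambda>x. (norm (f x))\<^sup>2)"
  shows "integrable M (\<lambda>x. (norm (S *v f x))\<^sup>2)"
proof -
  obtain K where K: "K > 0" "\<And>x. norm (S *v x) \<le> norm x * K" using mv_bound[of S] by blast
  show ?thesis
  proof (rule Bochner_Integration.integrable_bound[OF integrable_mult_right[OF fi, of "K^2"]])
    show "(\<lambda>x. (norm (S *v f x))\<^sup>2) \<in> borel_measurable M" by measurable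
    show "AE x in M. norm ((norm (S *v f x))\<^sup>2) \<le> norm (K\<^sup>2 * (norm (f x))\<^sup>2)"
    proof (intro AE_I2)
      fix x
      have "(norm (S *v f x))\<^sup>2 \<le> (norm (f x) * K)\<^sup>2" using K(2)[of "f x"] by (intro power_mono) auto
      then show "norm ((norm (S *v f x))\<^sup>2) \<le> norm (K\<^sup>2 * (norm (f x))\<^sup>2)"
        by (simp add: power_mult_distrib mult.commute)
    qed
  qed
qed

lemma quad_int:
  fixes f g :: "'w \<Rightarrow> real^'n" and S :: "real^'n^'n"
  assumes [measurable]: "f \<in> borel_measurable M" "g \<in> borel_measurable M"
    and fi: "integrable M (\<lambda>x. (norm (f x))\<^sup>2)" and gi: "integrable M (\<lambda>x. (norm (g x))\<^sup>2)"
  shows "integrable M (\<lambda>x. f x \<bullet> (S *v g x))"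
proof -
  obtain K where K: "K > 0" "\<And>x. norm (S *v x) \<le> norm x * K" using mv_bound[of S] by blast
  show ?thesis
  proof (rule Bochner_Integration.integrable_bound[OF integrable_mult_right[OF Bochner_Integration.integrable_add[OF fi gi], of K]])
    show "(\<lambda>x. f x \<bullet> (S *v g x)) \<in> borel_measurable M" by measurable
    show "AE x in M. norm (f x \<bullet> (S *v g x)) \<le> norm (K * ((norm (f x))\<^sup>2 + (norm (g x))\<^sup>2))"
    proof (intro AE_I2)
      fix x
      have "norm (f x \<bullet> (S *v g x)) \<le> norm (f x) * norm (S *v g x)"
        by (simp add: Cauchy_Schwarz_ineq2)
      also have "\<dots> \<le> norm (f x) * (norm (g x) * K)" using K(2)[of "g x"] by (intro mult_left_mono) auto
      also have "\<dots> = K * (norm (f x) * norm (g x))" by simp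
      also have "\<dots> \<le> K * ((norm (f x))\<^sup>2 + (norm (g x))\<^sup>2)"
      proof (intro mult_left_mono)
        have "0 \<le> (norm (f x) - norm (g x))\<^sup>2" by simp
        then have e: "2 * (norm (f x) * norm (g x)) \<le> norm (f x) * norm (f x) + norm (g x) * norm (g x)"
          by (simp add: power2_eq_square algebra_simps)
        have "0 \<le> norm (f x) * norm (g x)" by simp
        with e show "norm (f x) * norm (g x) \<le> (norm (f x))\<^sup>2 + (norm (g x))\<^sup>2"
          unfolding power2_eq_square by linarith
      qed (use K in auto)
      also have "\<dots> \<le> norm (K * ((norm (f x))\<^sup>2 + (norm (g x))\<^sup>2))" by simp
      finally show "norm (f x \<bullet> (S *v g x)) \<le> norm (K * ((norm (f x))\<^sup>2 + (norm (g x))\<^sup>2))" .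
    qed
  qed
qed

locale lqs =
  fixes M :: "'w measure" and N :: nat and x0 :: "'w \<Rightarrow> real^'n" and w :: "nat \<Rightarrow> 'w \<Rightarrow> real"
  assumes ps: "prob_space M"
    and x0m: "x0 \<in> borel_measurable M"
    and wm: "\<And>k. w k \<in> borel_measurable M"
    and w2i: "\<And>k. integrable M (\<lambda>\<omega>. (w k \<omega>)\<^sup>2)"
    and ce1: "\<And>k. AE \<omega> in M. real_cond_exp M (Fpre M x0 w k) (w k) \<omega> = 0"
    and ce2: "\<And>k. AE \<omega> in M. real_cond_exp M (Fpre M x0 w k) (\<lambda>\<omega>. (w k \<omega>)\<^sup>2) \<omega> = 1"
begin

definition gen :: "nat \<Rightarrow> 'w set set" where
  "gen k = ({x0 -` S \<inter> space M | S. S \<in> sets borel} \<union>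
      (\<Union>l\<in>{..k}. {w l -` S \<inter> space M | S. S \<in> sets borel}))"

lemma gen_pow: "gen k \<subseteq> Pow (space M)" unfolding gen_def by auto

lemma gen_M: "gen k \<subseteq> sets M"
  unfolding gen_def using x0m wm by (auto simp: measurable_sets)

lemma Ffilt_eq: "Ffilt M x0 w k = sigma (space M) (gen k)"
  unfolding Ffilt_def gen_def ..

lemma space_F: "space (Fpre M x0 w k) = space M"
  unfolding Fpre_def Ffilt_eq using gen_pow by auto

lemma sets_F: "sets (Fpre M x0 w k) = sigma_sets (space M) (if k = 0 then {} else gen (k - 1))"
  unfolding Fpre_def Ffilt_eq using gen_pow by auto

lemma gen_mono: "k \<le> j \<Longrightarrow> gen k \<subseteq> gen j" unfolding gen_def
  by (intro Un_mono subset_refl UN_mono) auto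

lemma F_mono: "k \<le> j \<Longrightarrow> sets (Fpre M x0 w k) \<subseteq> sets (Fpre M x0 w j)"
  unfolding sets_F
  apply (rule sigma_sets_mono')
  using gen_mono[of "k - 1" "j - 1"] by auto

lemma F_sub: "sets (Fpre M x0 w k) \<subseteq> sets M"
  unfolding sets_F
  using gen_M by (auto intro!: sets.sigma_sets_subset)

lemma subalg_F: "subalgebra M (Fpre M x0 w k)"
  unfolding subalgebra_def using space_F F_sub by auto

lemma subalg_FF: "k \<le> j \<Longrightarrow> subalgebra (Fpre M x0 w j) (Fpre M x0 w k)"
  unfolding subalgebra_def using space_F F_mono by auto

lemma measF_mono: "f \<in> measurable (Fpre M x0 w k) X \<Longrightarrow> k \<le> j \<Longrightarrow> f \<in> measurable (Fpre M x0 w j) X"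
  using measurable_from_subalg subalg_FF by blast

lemma measF_M: "f \<in> measurable (Fpre M x0 w k) X \<Longrightarrow> f \<in> measurable M X"
  using measurable_from_subalg subalg_F by blast

lemma w_measF: "w k \<in> borel_measurable (Fpre M x0 w (Suc k))"
proof (rule measurableI)
  fix A :: "real set" assume "A \<in> sets borel"
  then have "w k -` A \<inter> space M \<in> gen k" unfolding gen_def by blast
  then show "w k -` A \<inter> space (Fpre M x0 w (Suc k)) \<in> sets (Fpre M x0 w (Suc k))"
    unfolding space_F sets_F by auto
qed auto

lemma sfs: "sigma_finite_subalgebra M (Fpre M x0 w k)"
proof -
  interpret prob_space M by (rule ps)
  have "finite_measure_subalgebra M (Fpre M x0 w k)"
    by unfold_locales (rule subalg_F)
  then show ?thesis by (rule finite_measure_subalgebra_is_sigma_finite)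
qed


lemma NN:
  assumes hm: "h \<in> borel_measurable (Fpre M x0 w k)"
  shows "(\<integral>\<^sup>+x. ennreal (h x) * ennreal ((w k x)\<^sup>2) \<partial>M) = (\<integral>\<^sup>+x. ennreal (h x) \<partial>M)"
proof -
  interpret sigma_finite_subalgebra M "Fpre M x0 w k" by (rule sfs)
  let ?F = "Fpre M x0 w k"
  let ?g = "\<lambda>x. ennreal ((w k x)\<^sup>2)"
  have wmk[measurable]: "w k \<in> borel_measurable M" by (rule wm)
  have hmm[measurable]: "(\<lambda>x. ennreal (h x)) \<in> borel_measurable ?F" using hm by measurable
  have "(\<integral>\<^sup>+x. 1 * nn_cond_exp M ?F ?g x \<partial>M) = (\<integral>\<^sup>+x. 1 * ?g x \<partial>M)"
    by (rule nn_cond_exp_intg) auto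
  also have "\<dots> = (\<integral>\<^sup>+x. ennreal (norm ((w k x)\<^sup>2)) \<partial>M)" by simp
  also have "\<dots> < \<infinity>" using w2i[of k] by (simp add: integrable_iff_bounded)
  finally have I1: "(\<integral>\<^sup>+x. nn_cond_exp M ?F ?g x \<partial>M) \<noteq> \<infinity>" by simp
  have fin: "AE x in M. nn_cond_exp M ?F ?g x \<noteq> \<infinity>"
    by (rule nn_integral_PInf_AE[OF borel_measurable_nn_cond_exp2]) (use I1 in simp)
  have "(\<lambda>x. ennreal (- (w k x)\<^sup>2)) = (\<lambda>x. 0)" by (simp add: ennreal_neg)
  moreover have "AE x in M. 0 = nn_cond_exp M ?F (\<lambda>x. 0) x"
    by (rule nn_cond_exp_F_meas, auto)
  ultimately have zero: "AE x in M. nn_cond_exp M ?F (\<lambda>x. ennreal (- (w k x)\<^sup>2)) x = 0"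
    by simp
  have one: "AE x in M. nn_cond_exp M ?F ?g x = 1"
    using fin zero ce2[of k]
  proof eventually_elim
    case (elim x)
    then have "enn2real (nn_cond_exp M ?F ?g x) = 1" unfolding real_cond_exp_def by simp
    moreover have "nn_cond_exp M ?F ?g x = ennreal (enn2real (nn_cond_exp M ?F ?g x))"
      using elim(1) by (simp add: less_top)
    ultimately show ?case by simp
  qed
  have "(\<integral>\<^sup>+x. ennreal (h x) * ?g x \<partial>M) = (\<integral>\<^sup>+x. ennreal (h x) * nn_cond_exp M ?F ?g x \<partial>M)"
    by (rule nn_cond_exp_intg[symmetric]) auto
  also have "\<dots> = (\<integral>\<^sup>+x. ennreal (h x) \<partial>M)"
    by (rule nn_integral_cong_AE) (use one in auto)
  finally show ?thesis .
qed

lemma intW2: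
  assumes hm: "h \<in> borel_measurable (Fpre M x0 w k)" and hi: "integrable M h"
  shows "integrable M (\<lambda>x. h x * (w k x)\<^sup>2)" "(\<integral>x. h x * (w k x)\<^sup>2 \<partial>M) = (\<integral>x. h x \<partial>M)"
proof -
  interpret sigma_finite_subalgebra M "Fpre M x0 w k" by (rule sfs)
  let ?F = "Fpre M x0 w k"
  have wmk[measurable]: "w k \<in> borel_measurable M" by (rule wm)
  have hF[measurable]: "h \<in> borel_measurable ?F" by (rule hm)
  have hM[measurable]: "h \<in> borel_measurable M" by (rule measF_M[OF hm])
  have ahm: "(\<lambda>x. \<bar>h x\<bar>) \<in> borel_measurable ?F" using hm by measurable
  have "(\<integral>\<^sup>+x. ennreal (norm (h x * (w k x)\<^sup>2)) \<partial>M) = (\<integral>\<^sup>+x. ennreal \<bar>h x\<bar> * ennreal ((w k x)\<^sup>2) \<partial>M)"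
    by (rule nn_integral_cong) (simp add: abs_mult ennreal_mult)
  also have "\<dots> = (\<integral>\<^sup>+x. ennreal (norm (h x)) \<partial>M)" using NN[OF ahm] by simp
  also have "\<dots> < \<infinity>" using hi by (simp add: integrable_iff_bounded)
  finally show int: "integrable M (\<lambda>x. h x * (w k x)\<^sup>2)"
    by (intro integrableI_bounded) auto
  have "(\<integral>x. h x * (w k x)\<^sup>2 \<partial>M) = (\<integral>x. h x * real_cond_exp M ?F (\<lambda>x. (w k x)\<^sup>2) x \<partial>M)"
    by (rule real_cond_exp_intg(2)[symmetric]) (use int in auto)
  also have "\<dots> = (\<integral>x. h x \<partial>M)"
    by (rule integral_cong_AE) (use ce2[of k] in auto)
  finally show "(\<integral>x. h x * (w k x)\<^sup>2 \<partial>M) = (\<integral>x. h x \<partial>M)" .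
qed

lemma intW1:
  assumes hm: "h \<in> borel_measurable (Fpre M x0 w k)" and hi: "integrable M h"
  shows "integrable M (\<lambda>x. h x * w k x)" "(\<integral>x. h x * w k x \<partial>M) = 0"
proof -
  interpret sigma_finite_subalgebra M "Fpre M x0 w k" by (rule sfs)
  let ?F = "Fpre M x0 w k"
  have wmk[measurable]: "w k \<in> borel_measurable M" by (rule wm)
  have hF[measurable]: "h \<in> borel_measurable ?F" by (rule hm)
  have hM[measurable]: "h \<in> borel_measurable M" by (rule measF_M[OF hm])
  have ahm: "(\<lambda>x. \<bar>h x\<bar>) \<in> borel_measurable ?F" using hm by measurable
  have i2: "integrable M (\<lambda>x. \<bar>h x\<bar> * (w k x)\<^sup>2)" by (rule intW2(1)[OF ahm]) (use hi in auto)
  have b: "norm (h x * w k x) \<le> norm (\<bar>h x\<bar> + \<bar>h x\<bar> * (w k x)\<^sup>2)" for x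
  proof -
    have "\<bar>w k x\<bar> \<le> 1 + (w k x)\<^sup>2"
    proof -
      have "0 \<le> (\<bar>w k x\<bar> - 1)\<^sup>2" by simp
      then have "0 \<le> \<bar>w k x\<bar> * \<bar>w k x\<bar> - 2 * \<bar>w k x\<bar> + 1" by (simp add: power2_eq_square algebra_simps)
      then show ?thesis by (simp add: power2_eq_square abs_mult_self_eq)
    qed
    then have "\<bar>h x\<bar> * \<bar>w k x\<bar> \<le> \<bar>h x\<bar> * (1 + (w k x)\<^sup>2)" by (intro mult_left_mono) auto
    then show ?thesis by (simp add: abs_mult algebra_simps)
  qed
  show int: "integrable M (\<lambda>x. h x * w k x)"
    by (rule Bochner_Integration.integrable_bound[OF Bochner_Integration.integrable_add[OF integrable_abs[OF hi] i2]])
       (use b in auto)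
  have "(\<integral>x. h x * w k x \<partial>M) = (\<integral>x. h x * real_cond_exp M ?F (w k) x \<partial>M)"
    by (rule real_cond_exp_intg(2)[symmetric]) (use int in auto)
  also have "\<dots> = 0"
    by (subst integral_cong_AE[where g="\<lambda>x. 0"]) (use ce1[of k] in auto)
  finally show "(\<integral>x. h x * w k x \<partial>M) = 0" .
qed

lemma step:
  fixes a b :: "'w \<Rightarrow> real^'n" and S :: "real^'n^'n"
  assumes am: "a \<in> borel_measurable (Fpre M x0 w l)" and bm: "b \<in> borel_measurable (Fpre M x0 w l)"
    and ai: "integrable M (\<lambda>x. (norm (a x))\<^sup>2)" and bi: "integrable M (\<lambda>x. (norm (b x))\<^sup>2)"
  shows "(\<lambda>x. a x + w l x *\<^sub>R b x) \<in> borel_measurable (Fpre M x0 w (Suc l))"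
    and "integrable M (\<lambda>x. (norm (a x + w l x *\<^sub>R b x))\<^sup>2)"
    and "(\<integral>x. (a x + w l x *\<^sub>R b x) \<bullet> (S *v (a x + w l x *\<^sub>R b x)) \<partial>M)
          = (\<integral>x. a x \<bullet> (S *v a x) \<partial>M) + (\<integral>x. b x \<bullet> (S *v b x) \<partial>M)"
proof -
  have [measurable]: "a \<in> borel_measurable (Fpre M x0 w (Suc l))" "b \<in> borel_measurable (Fpre M x0 w (Suc l))"
    using measF_mono[OF am] measF_mono[OF bm] by auto
  have [measurable]: "w l \<in> borel_measurable (Fpre M x0 w (Suc l))" by (rule w_measF)
  show "(\<lambda>x. a x + w l x *\<^sub>R b x) \<in> borel_measurable (Fpre M x0 w (Suc l))" by measurable
  have aM[measurable]: "a \<in> borel_measurable M" by (rule measF_M[OF am])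
  have bM[measurable]: "b \<in> borel_measurable M" by (rule measF_M[OF bm])
  have wM[measurable]: "w l \<in> borel_measurable M" by (rule wm)
  have nbF: "(\<lambda>x. (norm (b x))\<^sup>2) \<in> borel_measurable (Fpre M x0 w l)" using bm by measurable
  have "integrable M (\<lambda>x. (norm (b x))\<^sup>2 * (w l x)\<^sup>2)" by (rule intW2(1)[OF nbF bi])
  then have wbi: "integrable M (\<lambda>x. (norm (w l x *\<^sub>R b x))\<^sup>2)"
    by (simp add: power_mult_distrib mult.commute)
  show "integrable M (\<lambda>x. (norm (a x + w l x *\<^sub>R b x))\<^sup>2)"
    by (rule sqint_add[OF aM _ ai wbi]) measurable
  define g where "g x = a x \<bullet> (S *v b x) + b x \<bullet> (S *v a x)" for x
  define h where "h x = b x \<bullet> (S *v b x)" for x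
  have gF: "g \<in> borel_measurable (Fpre M x0 w l)" unfolding g_def using am bm by measurable
  have hF: "h \<in> borel_measurable (Fpre M x0 w l)" unfolding h_def using bm by measurable
  have gi: "integrable M g" unfolding g_def
    by (intro Bochner_Integration.integrable_add quad_int aM bM ai bi)
  have hi: "integrable M h" unfolding h_def by (intro quad_int bM bi)
  have aai: "integrable M (\<lambda>x. a x \<bullet> (S *v a x))" by (intro quad_int aM ai)
  have pw: "(a x + w l x *\<^sub>R b x) \<bullet> (S *v (a x + w l x *\<^sub>R b x))
       = a x \<bullet> (S *v a x) + (g x * w l x + h x * (w l x)\<^sup>2)" for x
    unfolding g_def h_def
    by (simp add: inner_add_left inner_add_right matrix_vector_right_distrib matrix_vector_mult_scaleR
        algebra_simps power2_eq_square)
  have "(\<integral>x. (a x + w l x *\<^sub>R b x) \<bullet> (S *v (a x + w l x *\<^sub>R b x)) \<partial>M)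
      = (\<integral>x. a x \<bullet> (S *v a x) + (g x * w l x + h x * (w l x)\<^sup>2) \<partial>M)"
    by (simp add: pw)
  also have "\<dots> = (\<integral>x. a x \<bullet> (S *v a x) \<partial>M) + ((\<integral>x. g x * w l x \<partial>M) + (\<integral>x. h x * (w l x)\<^sup>2 \<partial>M))"
    by (simp add: Bochner_Integration.integral_add Bochner_Integration.integrable_add
        aai intW1(1)[OF gF gi] intW2(1)[OF hF hi])
  also have "\<dots> = (\<integral>x. a x \<bullet> (S *v a x) \<partial>M) + (\<integral>x. b x \<bullet> (S *v b x) \<partial>M)"
    using intW1(2)[OF gF gi] intW2(2)[OF hF hi] unfolding h_def by simp
  finally show "(\<integral>x. (a x + w l x *\<^sub>R b x) \<bullet> (S *v (a x + w l x *\<^sub>R b x)) \<partial>M)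
          = (\<integral>x. a x \<bullet> (S *v a x) \<partial>M) + (\<integral>x. b x \<bullet> (S *v b x) \<partial>M)" .
qed

end


lemma transpose_add: "transpose (X + Y) = transpose X + transpose (Y::real^'a^'b)"
  by (simp add: transpose_def vec_eq_iff)

lemma symdot: "transpose (P::real^'n^'n) = P \<Longrightarrow> x \<bullet> (P *v y) = y \<bullet> (P *v x)"
  by (metis dot_lmul_matrix inner_commute transpose_matrix_vector)

lemma tdot: "x \<bullet> (transpose (K::real^'a^'b) *v z) = (K *v x) \<bullet> z"
  by (metis dot_lmul_matrix inner_commute transpose_matrix_vector)

lemma quadK: "x \<bullet> ((transpose (K::real^'a^'b) ** P ** K) *v x) = (K *v x) \<bullet> (P *v (K *v x))"
proof -
  have "(transpose K ** P ** K) *v x = transpose K *v (P *v (K *v x))"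
    by (simp only: matrix_vector_mul_assoc matrix_mul_assoc)
  then show ?thesis by (simp only: tdot)
qed

lemma symK: "transpose (P::real^'b^'b) = P \<Longrightarrow> transpose (transpose (K::real^'a^'b) ** P ** K) = transpose K ** P ** K"
  by (simp add: matrix_transpose_mul matrix_mul_assoc)

lemma bilK: "x \<bullet> ((transpose (K::real^'a^'b) ** P ** K') *v z) = (K *v x) \<bullet> (P *v (K' *v z))"
proof -
  have "(transpose K ** P ** K') *v z = transpose K *v (P *v (K' *v z))"
    by (simp only: matrix_vector_mul_assoc matrix_mul_assoc)
  then show ?thesis by (simp only: tdot)
qed

lemma symsum: "transpose Qm = Qm \<Longrightarrow> transpose Rm = Rm \<Longrightarrow> transpose (P::real^'n^'n) = P \<Longrightarrow>
  transpose (Qm + transpose F ** (Rm::real^'m^'m) ** F + transpose K ** P ** K + transpose L ** P ** L)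
  = Qm + transpose F ** Rm ** F + transpose K ** P ** K + transpose L ** P ** L"
  by (simp only: transpose_add symK)

locale lq = lqs M N x0 w for M :: "'w measure" and N and x0 :: "'w \<Rightarrow> real^'n" and w +
  fixes A C :: "nat \<Rightarrow> nat \<Rightarrow> real^'n^'n" and B D :: "nat \<Rightarrow> nat \<Rightarrow> real^'m^'n"
    and Q :: "nat \<Rightarrow> nat \<Rightarrow> real^'n^'n" and R :: "nat \<Rightarrow> nat \<Rightarrow> real^'m^'m"
    and G :: "nat \<Rightarrow> real^'n^'n"
  assumes QR: "\<And>t k. t < N \<Longrightarrow> t \<le> k \<Longrightarrow> k < N \<Longrightarrow> transpose (Q t k) = Q t k \<and> transpose (R t k) = R t k
                            \<and> psd_mat (Q t k) \<and> pd_mat (R t k)"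
    and GG: "\<And>t. t < N \<Longrightarrow> transpose (G t) = G t \<and> psd_mat (G t)"
begin

fun PP :: "(nat \<Rightarrow> real^'n^'m) \<Rightarrow> nat \<Rightarrow> nat \<Rightarrow> real^'n^'n" where
  "PP \<Phi> k 0 = G k"
| "PP \<Phi> k (Suc i) = (let l = N - Suc i; K = A k l + B k l ** \<Phi> l; L = C k l + D k l ** \<Phi> l in
     Q k l + transpose (\<Phi> l) ** R k l ** \<Phi> l + transpose K ** PP \<Phi> k i ** K + transpose L ** PP \<Phi> k i ** L)"

lemma PP_cong: "i \<le> N \<Longrightarrow> (\<And>l. N - i \<le> l \<Longrightarrow> l < N \<Longrightarrow> \<Phi> l = \<Psi> l) \<Longrightarrow> PP \<Phi> k i = PP \<Psi> k i"
proof (induction i)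
  case (Suc i)
  then have "PP \<Phi> k i = PP \<Psi> k i" by auto
  moreover have "\<Phi> (N - Suc i) = \<Psi> (N - Suc i)" using Suc.prems by auto
  ultimately show ?case by (simp add: Let_def)
qed simp

lemma PP_quad:
  "x \<bullet> (PP \<Phi> k (Suc i) *v x) = (let l = N - Suc i in
     x \<bullet> (Q k l *v x) + (\<Phi> l *v x) \<bullet> (R k l *v (\<Phi> l *v x))
     + ((A k l + B k l ** \<Phi> l) *v x) \<bullet> (PP \<Phi> k i *v ((A k l + B k l ** \<Phi> l) *v x))
     + ((C k l + D k l ** \<Phi> l) *v x) \<bullet> (PP \<Phi> k i *v ((C k l + D k l ** \<Phi> l) *v x)))"
  by (simp add: Let_def matrix_vector_mult_add_rdistrib inner_add_right quadK)

lemma PP_psd: "k < N \<Longrightarrow> i \<le> N - k \<Longrightarrow> transpose (PP \<Phi> k i) = PP \<Phi> k i \<and> psd_mat (PP \<Phi> k i)"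
proof (induction i)
  case 0 then show ?case using GG[of k] by simp
next
  case (Suc i)
  let ?l = "N - Suc i"
  have l: "k \<le> ?l" "?l < N" using Suc.prems by auto
  have IH: "transpose (PP \<Phi> k i) = PP \<Phi> k i" "psd_mat (PP \<Phi> k i)" using Suc by auto
  have q: "transpose (Q k ?l) = Q k ?l" "transpose (R k ?l) = R k ?l" "psd_mat (Q k ?l)" "pd_mat (R k ?l)"
    using QR[OF Suc.prems(1) l] by auto
  have "transpose (PP \<Phi> k (Suc i)) = PP \<Phi> k (Suc i)"
    unfolding PP.simps Let_def by (rule symsum[OF q(1,2) IH(1)])
  moreover have "psd_mat (PP \<Phi> k (Suc i))"
    unfolding psd_mat_def
  proof
    fix x
    have "0 \<le> (\<Phi> ?l *v x) \<bullet> (R k ?l *v (\<Phi> ?l *v x))"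
      using q(4) unfolding pd_mat_def by (cases "\<Phi> ?l *v x = 0") (auto intro: less_imp_le)
    then show "0 \<le> x \<bullet> (PP \<Phi> k (Suc i) *v x)"
      unfolding PP_quad Let_def using q(3) IH(2) unfolding psd_mat_def
      by (intro add_nonneg_nonneg) auto
  qed
  ultimately show ?case ..
qed


definition Hm :: "real^'n^'n \<Rightarrow> nat \<Rightarrow> real^'m^'m" where
  "Hm P k = R k k + transpose (B k k) ** P ** B k k + transpose (D k k) ** P ** D k k"

definition Lm :: "real^'n^'n \<Rightarrow> nat \<Rightarrow> real^'n^'m" where
  "Lm P k = transpose (B k k) ** P ** A k k + transpose (D k k) ** P ** C k k"

definition qf :: "real^'n^'n \<Rightarrow> nat \<Rightarrow> real^'n \<Rightarrow> real^'m \<Rightarrow> real" where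
  "qf P k y v = y \<bullet> (Q k k *v y) + v \<bullet> (R k k *v v)
     + (A k k *v y + B k k *v v) \<bullet> (P *v (A k k *v y + B k k *v v))
     + (C k k *v y + D k k *v v) \<bullet> (P *v (C k k *v y + D k k *v v))"

lemma Hm_quad: "u \<bullet> (Hm P k *v z) = u \<bullet> (R k k *v z) + (B k k *v u) \<bullet> (P *v (B k k *v z)) + (D k k *v u) \<bullet> (P *v (D k k *v z))"
  unfolding Hm_def by (simp add: matrix_vector_mult_add_rdistrib inner_add_right bilK)

lemma Lm_quad: "u \<bullet> (Lm P k *v y) = (B k k *v u) \<bullet> (P *v (A k k *v y)) + (D k k *v u) \<bullet> (P *v (C k k *v y))"
  unfolding Lm_def by (simp add: matrix_vector_mult_add_rdistrib inner_add_right bilK)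

lemma quad_id:
  assumes Ps: "transpose P = P" and Rs: "transpose (R k k) = R k k"
    and foc: "Hm P k *v f = - (Lm P k *v y)"
  shows "qf P k y v - qf P k y f = (v - f) \<bullet> (Hm P k *v (v - f))"
proof -
  define u where "u = v - f"
  have v: "v = f + u" unfolding u_def by simp
  have "u \<bullet> (Hm P k *v f) + u \<bullet> (Lm P k *v y) = 0" using foc by (simp add: inner_minus_right)
  then have key: "u \<bullet> (R k k *v f) + (B k k *v u) \<bullet> (P *v (B k k *v f)) + (D k k *v u) \<bullet> (P *v (D k k *v f))
     + (B k k *v u) \<bullet> (P *v (A k k *v y)) + (D k k *v u) \<bullet> (P *v (C k k *v y)) = 0"
    unfolding Hm_quad Lm_quad by simp
  show ?thesis
    unfolding u_def[symmetric] v qf_def Hm_quad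
    using key
    by (simp add: inner_add_left inner_add_right matrix_vector_right_distrib symdot[OF Ps] symdot[OF Rs] algebra_simps)
qed


lemma Hm_pd: "k < N \<Longrightarrow> psd_mat P \<Longrightarrow> u \<noteq> 0 \<Longrightarrow> 0 < u \<bullet> (Hm P k *v u)"
  unfolding Hm_quad using QR[of k k] unfolding psd_mat_def pd_mat_def
  by (intro add_pos_nonneg) auto

lemma Hm_psd: "k < N \<Longrightarrow> psd_mat P \<Longrightarrow> 0 \<le> u \<bullet> (Hm P k *v u)"
  using Hm_pd[of k P u] by (cases "u = 0") auto

lemma Hm_inv: assumes "k < N" "psd_mat P" shows "Hm P k ** (SOME Z. Z ** Hm P k = mat 1) = mat 1"
proof -
  have "\<forall>x. Hm P k *v x = 0 \<longrightarrow> x = 0"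
  proof (intro allI impI)
    fix x assume "Hm P k *v x = 0"
    then have "x \<bullet> (Hm P k *v x) = 0" by simp
    then show "x = 0" using Hm_pd[OF assms, of x] by (cases "x = 0") auto
  qed
  then have "\<exists>Z. Z ** Hm P k = mat 1" by (simp add: matrix_left_invertible_ker)
  then have "(SOME Z. Z ** Hm P k = mat 1) ** Hm P k = mat 1" by (rule someI_ex)
  then show ?thesis by (simp add: matrix_left_right_inverse)
qed

definition optK :: "(nat \<Rightarrow> real^'n^'m) \<Rightarrow> nat \<Rightarrow> real^'n^'m" where
  "optK \<Phi> k = (let P = PP \<Phi> k (N - Suc k) in (SOME Z. Z ** Hm P k = mat 1) ** (- Lm P k))"

lemma foc:
  assumes k: "k < N" and opt: "\<Phi> k = optK \<Phi> k"
  shows "Hm (PP \<Phi> k (N - Suc k)) k *v (\<Phi> k *v y) = - (Lm (PP \<Phi> k (N - Suc k)) k *v y)"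
proof -
  let ?P = "PP \<Phi> k (N - Suc k)"
  have ps: "psd_mat ?P" using PP_psd[OF k, of "N - Suc k" \<Phi>] by auto
  have "Hm ?P k ** \<Phi> k = (Hm ?P k ** (SOME Z. Z ** Hm ?P k = mat 1)) ** (- Lm ?P k)"
    using opt unfolding optK_def Let_def by (simp add: matrix_mul_assoc)
  also have "\<dots> = - Lm ?P k" using Hm_inv[OF k ps] by simp
  finally have "Hm ?P k ** \<Phi> k = - Lm ?P k" .
  then have "(Hm ?P k ** \<Phi> k) *v y = (- Lm ?P k) *v y" by simp
  moreover have "(- X) *v z = - (X *v z)" for X :: "real^'n^'m" and z
    by (simp add: matrix_vector_mult_def vec_eq_iff sum_negf)
  ultimately show ?thesis by (simp add: matrix_vector_mul_assoc)
qed

lemma optK_cong: "k < N \<Longrightarrow> (\<And>l. k < l \<Longrightarrow> l < N \<Longrightarrow> \<Phi> l = \<Psi> l) \<Longrightarrow> optK \<Phi> k = optK \<Psi> k"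
  unfolding optK_def using PP_cong[of "N - Suc k" \<Phi> \<Psi> k] by (simp add: Let_def)

lemma exists_opt: "\<exists>\<Phi>. \<forall>k<N. \<Phi> k = optK \<Phi> k"
proof -
  have "\<exists>\<Phi>. \<forall>k. N - i \<le> k \<and> k < N \<longrightarrow> \<Phi> k = optK \<Phi> k" for i
  proof (induction i)
    case 0 then show ?case by auto
  next
    case (Suc i)
    then obtain \<Phi> where P: "\<forall>k. N - i \<le> k \<and> k < N \<longrightarrow> \<Phi> k = optK \<Phi> k" by blast
    show ?case
    proof (cases "i < N")
      case False
      then show ?thesis using P by (intro exI[of _ \<Phi>]) auto
    next
      case True
      define k0 where "k0 = N - Suc i"
      define \<Psi> where "\<Psi> = \<Phi>(k0 := optK \<Phi> k0)"
      have k0: "k0 < N" "N - i = Suc k0" using True unfolding k0_def by auto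
      have "\<Psi> k = optK \<Psi> k" if "N - Suc i \<le> k" "k < N" for k
      proof (cases "k = k0")
        case True
        have "optK \<Psi> k0 = optK \<Phi> k0" by (rule optK_cong) (use k0 in \<open>auto simp: \<Psi>_def\<close>)
        then show ?thesis using True by (simp add: \<Psi>_def)
      next
        case False
        then have kk: "k0 < k" using that k0_def by auto
        have "optK \<Psi> k = optK \<Phi> k" by (rule optK_cong) (use kk that in \<open>auto simp: \<Psi>_def\<close>)
        moreover have "\<Phi> k = optK \<Phi> k" using P kk k0 that by auto
        ultimately show ?thesis using False by (simp add: \<Psi>_def)
      qed
      then show ?thesis by blast
    qed
  qed
  from this[of N] show ?thesis by auto
qed

lemma PP_qf: "k < N \<Longrightarrow> x \<bullet> (PP \<Phi> k (N - k) *v x) = qf (PP \<Phi> k (N - Suc k)) k x (\<Phi> k *v x)"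
proof -
  assume k: "k < N"
  then have e: "N - k = Suc (N - Suc k)" "N - Suc (N - Suc k) = k" by auto
  show ?thesis
    unfolding e(1) PP_quad e(2) Let_def qf_def
    by (simp add: matrix_vector_mult_add_rdistrib matrix_vector_mul_assoc)
qed

end

context lq begin

lemma procX:
  fixes X :: "nat \<Rightarrow> 'w \<Rightarrow> real^'n" and \<Phi> :: "nat \<Rightarrow> real^'n^'m"
  assumes rec: "\<And>j. jz \<le> j \<Longrightarrow> X (Suc j) = (\<lambda>\<omega>. (A k (k+j) + B k (k+j) ** \<Phi> (k+j)) *v X j \<omega>
                     + w (k+j) \<omega> *\<^sub>R ((C k (k+j) + D k (k+j) ** \<Phi> (k+j)) *v X j \<omega>))"
    and meas: "X jz \<in> borel_measurable (Fpre M x0 w (k + jz))" and sq: "integrable M (\<lambda>\<omega>. (norm (X jz \<omega>))\<^sup>2)"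
    and j: "jz \<le> j"
  shows "X j \<in> borel_measurable (Fpre M x0 w (k + j)) \<and> integrable M (\<lambda>\<omega>. (norm (X j \<omega>))\<^sup>2)"
  using j
proof (induction j)
  case 0 then show ?case using meas sq by simp
next
  case (Suc j)
  show ?case
  proof (cases "jz \<le> j")
    case False
    then have "jz = Suc j" using Suc.prems by auto
    then show ?thesis using meas sq by simp
  next
    case True
    then have IH: "X j \<in> borel_measurable (Fpre M x0 w (k + j))" "integrable M (\<lambda>\<omega>. (norm (X j \<omega>))\<^sup>2)"
      using Suc.IH by auto
    have XM: "X j \<in> borel_measurable M" using measF_M[OF IH(1)] .
    note st = step[OF mv_meas[OF IH(1)] mv_meas[OF IH(1)] sqint_mat[OF XM IH(2)] sqint_mat[OF XM IH(2)]]
    show ?thesis using st(1,2) rec[OF True] by simp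
  qed
qed


lemma tail:
  fixes X :: "nat \<Rightarrow> 'w \<Rightarrow> real^'n" and \<Phi> :: "nat \<Rightarrow> real^'n^'m"
  assumes rec: "\<And>j. jz \<le> j \<Longrightarrow> X (Suc j) = (\<lambda>\<omega>. (A k (k+j) + B k (k+j) ** \<Phi> (k+j)) *v X j \<omega>
                     + w (k+j) \<omega> *\<^sub>R ((C k (k+j) + D k (k+j) ** \<Phi> (k+j)) *v X j \<omega>))"
    and meas: "X jz \<in> borel_measurable (Fpre M x0 w (k + jz))" and sq: "integrable M (\<lambda>\<omega>. (norm (X jz \<omega>))\<^sup>2)"
    and j: "jz \<le> j" "k + j \<le> N"
  shows "(\<Sum>l\<in>{k+j..<N}. \<integral>\<omega>. X (l-k) \<omega> \<bullet> (Q k l *v X (l-k) \<omega>) + (\<Phi> l *v X (l-k) \<omega>) \<bullet> (R k l *v (\<Phi> l *v X (l-k) \<omega>)) \<partial>M)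
        + (\<integral>\<omega>. X (N-k) \<omega> \<bullet> (G k *v X (N-k) \<omega>) \<partial>M)
        = (\<integral>\<omega>. X j \<omega> \<bullet> (PP \<Phi> k (N-k-j) *v X j \<omega>) \<partial>M)"
proof -
  have "\<forall>j. jz \<le> j \<longrightarrow> k + j \<le> N \<longrightarrow> N - k - j = i \<longrightarrow>
        (\<Sum>l\<in>{k+j..<N}. \<integral>\<omega>. X (l-k) \<omega> \<bullet> (Q k l *v X (l-k) \<omega>) + (\<Phi> l *v X (l-k) \<omega>) \<bullet> (R k l *v (\<Phi> l *v X (l-k) \<omega>)) \<partial>M)
        + (\<integral>\<omega>. X (N-k) \<omega> \<bullet> (G k *v X (N-k) \<omega>) \<partial>M)
        = (\<integral>\<omega>. X j \<omega> \<bullet> (PP \<Phi> k (N-k-j) *v X j \<omega>) \<partial>M)" for i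
  proof (induction i)
    case 0
    show ?case
    proof (intro allI impI)
      fix j assume "jz \<le> j" "k + j \<le> N" "N - k - j = 0"
      then have "j = N - k" by auto
      then show "(\<Sum>l\<in>{k+j..<N}. \<integral>\<omega>. X (l-k) \<omega> \<bullet> (Q k l *v X (l-k) \<omega>) + (\<Phi> l *v X (l-k) \<omega>) \<bullet> (R k l *v (\<Phi> l *v X (l-k) \<omega>)) \<partial>M)
        + (\<integral>\<omega>. X (N-k) \<omega> \<bullet> (G k *v X (N-k) \<omega>) \<partial>M)
        = (\<integral>\<omega>. X j \<omega> \<bullet> (PP \<Phi> k (N-k-j) *v X j \<omega>) \<partial>M)"
        using \<open>k + j \<le> N\<close> by simp
    qed
  next
    case (Suc i)
    show ?case
    proof (intro allI impI)
      fix j assume j: "jz \<le> j" "k + j \<le> N" "N - k - j = Suc i"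
      then have kj: "k + j < N" by auto
      have ij: "N - k - Suc j = i" "N - Suc i = k + j" using j by auto
      have IH: "(\<Sum>l\<in>{k+Suc j..<N}. \<integral>\<omega>. X (l-k) \<omega> \<bullet> (Q k l *v X (l-k) \<omega>) + (\<Phi> l *v X (l-k) \<omega>) \<bullet> (R k l *v (\<Phi> l *v X (l-k) \<omega>)) \<partial>M)
        + (\<integral>\<omega>. X (N-k) \<omega> \<bullet> (G k *v X (N-k) \<omega>) \<partial>M)
        = (\<integral>\<omega>. X (Suc j) \<omega> \<bullet> (PP \<Phi> k i *v X (Suc j) \<omega>) \<partial>M)"
      proof -
        have pre: "jz \<le> Suc j" "k + Suc j \<le> N" using j kj by auto
        show ?thesis using Suc.IH[rule_format, OF pre ij(1)] by (simp only: ij(1))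
      qed
      let ?l = "k + j"
      let ?K = "A k ?l + B k ?l ** \<Phi> ?l"
      let ?L = "C k ?l + D k ?l ** \<Phi> ?l"
      let ?P = "PP \<Phi> k i"
      have Xjz: "X j \<in> borel_measurable (Fpre M x0 w (k + j)) \<and> integrable M (\<lambda>\<omega>. (norm (X j \<omega>))\<^sup>2)"
        apply (rule procX[where X=X and \<Phi>=\<Phi> and jz=jz and k=k and j=j])
           apply (erule rec) apply (rule meas) apply (rule sq) apply (rule j(1))
        done
      have Xj: "X j \<in> borel_measurable (Fpre M x0 w (k + j))" "integrable M (\<lambda>\<omega>. (norm (X j \<omega>))\<^sup>2)"
        using Xjz by auto
      have XM: "X j \<in> borel_measurable M" using measF_M[OF Xj(1)] .
      have Kmeas: "(\<lambda>\<omega>. ?K *v X j \<omega>) \<in> borel_measurable M" "(\<lambda>\<omega>. ?L *v X j \<omega>) \<in> borel_measurable M"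
        "(\<lambda>\<omega>. \<Phi> ?l *v X j \<omega>) \<in> borel_measurable M"
        using XM by measurable
      note sqK = sqint_mat[OF XM Xj(2), of ?K] sqint_mat[OF XM Xj(2), of ?L] sqint_mat[OF XM Xj(2), of "\<Phi> ?l"]
      have st: "(\<integral>\<omega>. X (Suc j) \<omega> \<bullet> (?P *v X (Suc j) \<omega>) \<partial>M)
          = (\<integral>\<omega>. (?K *v X j \<omega>) \<bullet> (?P *v (?K *v X j \<omega>)) \<partial>M) + (\<integral>\<omega>. (?L *v X j \<omega>) \<bullet> (?P *v (?L *v X j \<omega>)) \<partial>M)"
        unfolding rec[OF j(1)]
        by (rule step(3)[OF mv_meas[OF Xj(1)] mv_meas[OF Xj(1)] sqK(1,2)])
      have i1: "integrable M (\<lambda>\<omega>. X j \<omega> \<bullet> (Q k ?l *v X j \<omega>) + (\<Phi> ?l *v X j \<omega>) \<bullet> (R k ?l *v (\<Phi> ?l *v X j \<omega>)))"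
        by (intro Bochner_Integration.integrable_add quad_int XM Xj(2) Kmeas sqK)
      have i2: "integrable M (\<lambda>\<omega>. (?K *v X j \<omega>) \<bullet> (?P *v (?K *v X j \<omega>)))"
        by (intro quad_int Kmeas sqK)
      have i3: "integrable M (\<lambda>\<omega>. (?L *v X j \<omega>) \<bullet> (?P *v (?L *v X j \<omega>)))"
        by (intro quad_int Kmeas sqK)
      have pw: "X j \<omega> \<bullet> (PP \<Phi> k (N-k-j) *v X j \<omega>) =
          (X j \<omega> \<bullet> (Q k ?l *v X j \<omega>) + (\<Phi> ?l *v X j \<omega>) \<bullet> (R k ?l *v (\<Phi> ?l *v X j \<omega>)))
          + (?K *v X j \<omega>) \<bullet> (?P *v (?K *v X j \<omega>)) + (?L *v X j \<omega>) \<bullet> (?P *v (?L *v X j \<omega>))" for \<omega>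
        unfolding j(3) PP_quad ij(2) Let_def by simp
      have "(\<integral>\<omega>. X j \<omega> \<bullet> (PP \<Phi> k (N-k-j) *v X j \<omega>) \<partial>M)
          = (\<integral>\<omega>. X j \<omega> \<bullet> (Q k ?l *v X j \<omega>) + (\<Phi> ?l *v X j \<omega>) \<bullet> (R k ?l *v (\<Phi> ?l *v X j \<omega>)) \<partial>M)
            + (\<integral>\<omega>. (?K *v X j \<omega>) \<bullet> (?P *v (?K *v X j \<omega>)) \<partial>M) + (\<integral>\<omega>. (?L *v X j \<omega>) \<bullet> (?P *v (?L *v X j \<omega>)) \<partial>M)"
        unfolding pw using i1 i2 i3
        by (simp add: Bochner_Integration.integral_add Bochner_Integration.integrable_add)
      moreover have "(\<Sum>l\<in>{k+j..<N}. \<integral>\<omega>. X (l-k) \<omega> \<bullet> (Q k l *v X (l-k) \<omega>) + (\<Phi> l *v X (l-k) \<omega>) \<bullet> (R k l *v (\<Phi> l *v X (l-k) \<omega>)) \<partial>M)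
         = (\<integral>\<omega>. X j \<omega> \<bullet> (Q k ?l *v X j \<omega>) + (\<Phi> ?l *v X j \<omega>) \<bullet> (R k ?l *v (\<Phi> ?l *v X j \<omega>)) \<partial>M)
          + (\<Sum>l\<in>{k+Suc j..<N}. \<integral>\<omega>. X (l-k) \<omega> \<bullet> (Q k l *v X (l-k) \<omega>) + (\<Phi> l *v X (l-k) \<omega>) \<bullet> (R k l *v (\<Phi> l *v X (l-k) \<omega>)) \<partial>M)"
        using kj by (simp add: sum.atLeast_Suc_lessThan)
      ultimately show "(\<Sum>l\<in>{k+j..<N}. \<integral>\<omega>. X (l-k) \<omega> \<bullet> (Q k l *v X (l-k) \<omega>) + (\<Phi> l *v X (l-k) \<omega>) \<bullet> (R k l *v (\<Phi> l *v X (l-k) \<omega>)) \<partial>M)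
        + (\<integral>\<omega>. X (N-k) \<omega> \<bullet> (G k *v X (N-k) \<omega>) \<partial>M)
        = (\<integral>\<omega>. X j \<omega> \<bullet> (PP \<Phi> k (N-k-j) *v X j \<omega>) \<partial>M)"
        using IH st by simp
    qed
  qed
  then show ?thesis using j by blast
qed

end

context lq begin

lemma state_cl:
  "stateX A B C D w k Y (\<lambda>l \<omega>. \<Phi> l *v clX A B C D w \<Phi> k Y (l - k) \<omega>) j \<omega> = clX A B C D w \<Phi> k Y j \<omega>"
  by (induction j) (simp_all add: Let_def matrix_vector_mult_add_rdistrib matrix_vector_mul_assoc)

lemma state_p:
  "stateX A B C D w k Y (\<lambda>l \<omega>. if l = k then v \<omega> else \<Phi> l *v pX A B C D w \<Phi> k Y v (l - k) \<omega>) j \<omega>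
   = pX A B C D w \<Phi> k Y v j \<omega>"
  by (induction j) (simp_all add: Let_def matrix_vector_mult_add_rdistrib matrix_vector_mul_assoc)

lemma cost_phi:
  fixes \<Phi> :: "nat \<Rightarrow> real^'n^'m"
  assumes k: "k < N" and Ym: "Y \<in> borel_measurable (Fpre M x0 w k)" and Yi: "integrable M (\<lambda>\<omega>. (norm (Y \<omega>))\<^sup>2)"
  shows "costJ M N A B C D Q R G w k Y (\<lambda>l \<omega>. \<Phi> l *v clX A B C D w \<Phi> k Y (l - k) \<omega>)
       = (\<integral>\<omega>. Y \<omega> \<bullet> (PP \<Phi> k (N - k) *v Y \<omega>) \<partial>M)"
proof -
  let ?X = "clX A B C D w \<Phi> k Y"
  have rec: "\<And>j. 0 \<le> j \<Longrightarrow> ?X (Suc j) = (\<lambda>\<omega>. (A k (k+j) + B k (k+j) ** \<Phi> (k+j)) *v ?X j \<omega>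
                     + w (k+j) \<omega> *\<^sub>R ((C k (k+j) + D k (k+j) ** \<Phi> (k+j)) *v ?X j \<omega>))"
    by (rule ext) (simp add: Let_def)
  have T: "(\<Sum>l\<in>{k+0..<N}. \<integral>\<omega>. ?X (l-k) \<omega> \<bullet> (Q k l *v ?X (l-k) \<omega>) + (\<Phi> l *v ?X (l-k) \<omega>) \<bullet> (R k l *v (\<Phi> l *v ?X (l-k) \<omega>)) \<partial>M)
        + (\<integral>\<omega>. ?X (N-k) \<omega> \<bullet> (G k *v ?X (N-k) \<omega>) \<partial>M)
        = (\<integral>\<omega>. ?X 0 \<omega> \<bullet> (PP \<Phi> k (N-k-0) *v ?X 0 \<omega>) \<partial>M)"
    by (rule tail[where jz=0, OF rec]) (use Ym Yi k in auto)
  show ?thesis unfolding costJ_def state_cl using T by simp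
qed


lemma qf_int:
  fixes Y :: "'w \<Rightarrow> real^'n" and V :: "'w \<Rightarrow> real^'m"
  assumes [measurable]: "Y \<in> borel_measurable M" "V \<in> borel_measurable M"
    and Yi: "integrable M (\<lambda>\<omega>. (norm (Y \<omega>))\<^sup>2)" and Vi: "integrable M (\<lambda>\<omega>. (norm (V \<omega>))\<^sup>2)"
  shows "integrable M (\<lambda>\<omega>. qf P k (Y \<omega>) (V \<omega>))"
proof -
  have m: "(\<lambda>\<omega>. A k k *v Y \<omega> + B k k *v V \<omega>) \<in> borel_measurable M"
          "(\<lambda>\<omega>. C k k *v Y \<omega> + D k k *v V \<omega>) \<in> borel_measurable M" by measurable
  have s1: "integrable M (\<lambda>\<omega>. (norm (A k k *v Y \<omega> + B k k *v V \<omega>))\<^sup>2)"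
    by (rule sqint_add) (measurable, intro sqint_mat Yi Vi, measurable, intro sqint_mat Yi Vi, measurable)
  have s2: "integrable M (\<lambda>\<omega>. (norm (C k k *v Y \<omega> + D k k *v V \<omega>))\<^sup>2)"
    by (rule sqint_add) (measurable, intro sqint_mat Yi Vi, measurable, intro sqint_mat Yi Vi, measurable)
  show ?thesis unfolding qf_def
    by (intro Bochner_Integration.integrable_add quad_int Yi Vi s1 s2 m) measurable
qed

lemma cost_v:
  fixes \<Phi> :: "nat \<Rightarrow> real^'n^'m" and v :: "'w \<Rightarrow> real^'m"
  assumes k: "k < N" and Ym: "Y \<in> borel_measurable (Fpre M x0 w k)" and Yi: "integrable M (\<lambda>\<omega>. (norm (Y \<omega>))\<^sup>2)"
    and vm: "v \<in> borel_measurable (Fpre M x0 w k)" and vi: "integrable M (\<lambda>\<omega>. (norm (v \<omega>))\<^sup>2)"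
  shows "costJ M N A B C D Q R G w k Y (\<lambda>l \<omega>. if l = k then v \<omega> else \<Phi> l *v pX A B C D w \<Phi> k Y v (l - k) \<omega>)
       = (\<integral>\<omega>. qf (PP \<Phi> k (N - Suc k)) k (Y \<omega>) (v \<omega>) \<partial>M)"
proof -
  let ?X = "pX A B C D w \<Phi> k Y v"
  let ?P = "PP \<Phi> k (N - Suc k)"
  define a where "a \<omega> = A k k *v Y \<omega> + B k k *v v \<omega>" for \<omega>
  define b where "b \<omega> = C k k *v Y \<omega> + D k k *v v \<omega>" for \<omega>
  have YM[measurable]: "Y \<in> borel_measurable M" by (rule measF_M[OF Ym])
  have vM[measurable]: "v \<in> borel_measurable M" by (rule measF_M[OF vm])
  have am: "a \<in> borel_measurable (Fpre M x0 w k)" "b \<in> borel_measurable (Fpre M x0 w k)"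
    unfolding a_def b_def using Ym vm by measurable
  have ai: "integrable M (\<lambda>\<omega>. (norm (a \<omega>))\<^sup>2)" "integrable M (\<lambda>\<omega>. (norm (b \<omega>))\<^sup>2)"
    unfolding a_def b_def
    by (rule sqint_add, measurable, intro sqint_mat Yi vi, measurable, intro sqint_mat Yi vi, measurable)+
  note st = step[OF am ai]
  have X1: "?X 1 = (\<lambda>\<omega>. a \<omega> + w k \<omega> *\<^sub>R b \<omega>)"
    by (rule ext) (simp add: a_def b_def Let_def)
  have rec: "\<And>j. 1 \<le> j \<Longrightarrow> ?X (Suc j) = (\<lambda>\<omega>. (A k (k+j) + B k (k+j) ** \<Phi> (k+j)) *v ?X j \<omega>
                     + w (k+j) \<omega> *\<^sub>R ((C k (k+j) + D k (k+j) ** \<Phi> (k+j)) *v ?X j \<omega>))"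
    by (rule ext) (simp add: Let_def)
  have T: "(\<Sum>l\<in>{k+1..<N}. \<integral>\<omega>. ?X (l-k) \<omega> \<bullet> (Q k l *v ?X (l-k) \<omega>) + (\<Phi> l *v ?X (l-k) \<omega>) \<bullet> (R k l *v (\<Phi> l *v ?X (l-k) \<omega>)) \<partial>M)
        + (\<integral>\<omega>. ?X (N-k) \<omega> \<bullet> (G k *v ?X (N-k) \<omega>) \<partial>M)
        = (\<integral>\<omega>. ?X 1 \<omega> \<bullet> (PP \<Phi> k (N-k-1) *v ?X 1 \<omega>) \<partial>M)"
    by (rule tail[where jz=1, OF rec]) (use k st(1,2) X1 in auto)
  have T2: "(\<integral>\<omega>. ?X 1 \<omega> \<bullet> (PP \<Phi> k (N-k-1) *v ?X 1 \<omega>) \<partial>M)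
      = (\<integral>\<omega>. a \<omega> \<bullet> (?P *v a \<omega>) \<partial>M) + (\<integral>\<omega>. b \<omega> \<bullet> (?P *v b \<omega>) \<partial>M)"
    unfolding X1 using st(3)[of ?P] by simp
  have sumeq: "(\<Sum>l\<in>{k..<N}. \<integral>\<omega>. stateX A B C D w k Y (\<lambda>l \<omega>. if l = k then v \<omega> else \<Phi> l *v ?X (l - k) \<omega>) (l - k) \<omega> \<bullet>
             (Q k l *v stateX A B C D w k Y (\<lambda>l \<omega>. if l = k then v \<omega> else \<Phi> l *v ?X (l - k) \<omega>) (l - k) \<omega>) +
             (if l = k then v \<omega> else \<Phi> l *v ?X (l - k) \<omega>) \<bullet> (R k l *v (if l = k then v \<omega> else \<Phi> l *v ?X (l - k) \<omega>)) \<partial>M)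
     = (\<integral>\<omega>. Y \<omega> \<bullet> (Q k k *v Y \<omega>) + v \<omega> \<bullet> (R k k *v v \<omega>) \<partial>M)
       + (\<Sum>l\<in>{k+1..<N}. \<integral>\<omega>. ?X (l-k) \<omega> \<bullet> (Q k l *v ?X (l-k) \<omega>) + (\<Phi> l *v ?X (l-k) \<omega>) \<bullet> (R k l *v (\<Phi> l *v ?X (l-k) \<omega>)) \<partial>M)"
    using k by (simp add: sum.atLeast_Suc_lessThan state_p)
  have i1: "integrable M (\<lambda>\<omega>. Y \<omega> \<bullet> (Q k k *v Y \<omega>) + v \<omega> \<bullet> (R k k *v v \<omega>))"
    by (intro Bochner_Integration.integrable_add quad_int YM vM Yi vi)
  have aM: "a \<in> borel_measurable M" "b \<in> borel_measurable M" using am by (auto intro: measF_M)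
  have i2: "integrable M (\<lambda>\<omega>. a \<omega> \<bullet> (?P *v a \<omega>))" "integrable M (\<lambda>\<omega>. b \<omega> \<bullet> (?P *v b \<omega>))"
    by (intro quad_int aM ai)+
  have "(\<integral>\<omega>. qf ?P k (Y \<omega>) (v \<omega>) \<partial>M) = (\<integral>\<omega>. (Y \<omega> \<bullet> (Q k k *v Y \<omega>) + v \<omega> \<bullet> (R k k *v v \<omega>))
      + a \<omega> \<bullet> (?P *v a \<omega>) + b \<omega> \<bullet> (?P *v b \<omega>) \<partial>M)"
    unfolding qf_def a_def b_def by (simp add: add.assoc)
  also have "\<dots> = (\<integral>\<omega>. Y \<omega> \<bullet> (Q k k *v Y \<omega>) + v \<omega> \<bullet> (R k k *v v \<omega>) \<partial>M)
      + (\<integral>\<omega>. a \<omega> \<bullet> (?P *v a \<omega>) \<partial>M) + (\<integral>\<omega>. b \<omega> \<bullet> (?P *v b \<omega>) \<partial>M)"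
    using i1 i2 by (simp add: Bochner_Integration.integral_add Bochner_Integration.integrable_add)
  finally have Q: "(\<integral>\<omega>. qf ?P k (Y \<omega>) (v \<omega>) \<partial>M) = (\<integral>\<omega>. Y \<omega> \<bullet> (Q k k *v Y \<omega>) + v \<omega> \<bullet> (R k k *v v \<omega>) \<partial>M)
      + (\<integral>\<omega>. a \<omega> \<bullet> (?P *v a \<omega>) \<partial>M) + (\<integral>\<omega>. b \<omega> \<bullet> (?P *v b \<omega>) \<partial>M)" .
  have NN: "N - k - 1 = N - Suc k" by simp
  show ?thesis
    unfolding costJ_def sumeq Q
    using T T2 unfolding NN state_p by simp
qed

end

context lq begin

lemma eqX_meas:
  fixes \<Phi> :: "nat \<Rightarrow> real^'n^'m"
  shows "eqX A B C D w \<Phi> t x j \<in> borel_measurable (Fpre M x0 w (t + j))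
    \<and> integrable M (\<lambda>\<omega>. (norm (eqX A B C D w \<Phi> t x j \<omega>))\<^sup>2)"
proof (induction j)
  case 0
  interpret prob_space M by (rule ps)
  have e: "eqX A B C D w \<Phi> t x 0 = (\<lambda>\<omega>. x)" by (rule ext) simp
  show ?case unfolding e by simp
next
  case (Suc j)
  let ?X = "eqX A B C D w \<Phi> t x j"
  have IH: "?X \<in> borel_measurable (Fpre M x0 w (t + j))" "integrable M (\<lambda>\<omega>. (norm (?X \<omega>))\<^sup>2)"
    using Suc by auto
  have XM: "?X \<in> borel_measurable M" using measF_M[OF IH(1)] .
  note st = step[OF mv_meas[OF IH(1)] mv_meas[OF IH(1)] sqint_mat[OF XM IH(2)] sqint_mat[OF XM IH(2)]]
  have e: "eqX A B C D w \<Phi> t x (Suc j) = (\<lambda>\<omega>. (A (t+j) (t+j) + B (t+j) (t+j) ** \<Phi> (t+j)) *v ?X \<omega>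
     + w (t+j) \<omega> *\<^sub>R ((C (t+j) (t+j) + D (t+j) (t+j) ** \<Phi> (t+j)) *v ?X \<omega>))"
    by (rule ext) (simp add: Let_def)
  show ?case unfolding e using st(1,2) by simp
qed

lemma qf_min:
  fixes \<Phi> :: "nat \<Rightarrow> real^'n^'m"
  assumes k: "k < N" and opt: "\<Phi> k = optK \<Phi> k"
  shows "qf (PP \<Phi> k (N - Suc k)) k y v - qf (PP \<Phi> k (N - Suc k)) k y (\<Phi> k *v y)
       = (v - \<Phi> k *v y) \<bullet> (Hm (PP \<Phi> k (N - Suc k)) k *v (v - \<Phi> k *v y))"
proof -
  have Ps: "transpose (PP \<Phi> k (N - Suc k)) = PP \<Phi> k (N - Suc k)" using PP_psd[OF k, of "N - Suc k" \<Phi>] by auto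
  have Rs: "transpose (R k k) = R k k" using QR[of k k] k by auto
  show ?thesis by (rule quad_id[OF Ps Rs foc[OF k opt]])
qed

lemma Hpsd: "k < N \<Longrightarrow> 0 \<le> u \<bullet> (Hm (PP \<Phi> k (N - Suc k)) k *v u)"
  by (rule Hm_psd) (use PP_psd[of k "N - Suc k" \<Phi>] in auto)

lemma existence:
  fixes \<Phi> :: "nat \<Rightarrow> real^'n^'m"
  assumes opt: "\<forall>k<N. \<Phi> k = optK \<Phi> k"
  shows "is_equilibrium M N A B C D Q R G x0 w \<Phi>"
  unfolding is_equilibrium_def Let_def
proof (intro allI impI ballI)
  fix t x k and v :: "'w \<Rightarrow> real^'m"
  assume t: "t < N" and kin: "k \<in> {t..<N}"
    and vv: "v \<in> borel_measurable (Fpre M x0 w k) \<and> integrable M (\<lambda>\<omega>. (norm (v \<omega>))\<^sup>2)"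
  let ?Y = "eqX A B C D w \<Phi> t x (k - t)"
  let ?P = "PP \<Phi> k (N - Suc k)"
  have k: "k < N" "t + (k - t) = k" using kin by auto
  have Y: "?Y \<in> borel_measurable (Fpre M x0 w k)" "integrable M (\<lambda>\<omega>. (norm (?Y \<omega>))\<^sup>2)"
    using eqX_meas[of \<Phi> t x "k - t"] k(2) by auto
  have YM: "?Y \<in> borel_measurable M" using measF_M[OF Y(1)] .
  have vM: "v \<in> borel_measurable M" using measF_M vv by blast
  have PY: "(\<lambda>\<omega>. \<Phi> k *v ?Y \<omega>) \<in> borel_measurable M" using YM by measurable
  have c1: "costJ M N A B C D Q R G w k ?Y (\<lambda>l \<omega>. \<Phi> l *v clX A B C D w \<Phi> k ?Y (l - k) \<omega>)
      = (\<integral>\<omega>. qf ?P k (?Y \<omega>) (\<Phi> k *v ?Y \<omega>) \<partial>M)"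
    unfolding cost_phi[OF k(1) Y] PP_qf[OF k(1)] ..
  have c2: "costJ M N A B C D Q R G w k ?Y (\<lambda>l \<omega>. if l = k then v \<omega> else \<Phi> l *v pX A B C D w \<Phi> k ?Y v (l - k) \<omega>)
      = (\<integral>\<omega>. qf ?P k (?Y \<omega>) (v \<omega>) \<partial>M)"
    using cost_v[OF k(1) Y] vv by auto
  have "(\<integral>\<omega>. qf ?P k (?Y \<omega>) (\<Phi> k *v ?Y \<omega>) \<partial>M) \<le> (\<integral>\<omega>. qf ?P k (?Y \<omega>) (v \<omega>) \<partial>M)"
  proof (rule integral_mono)
    show "integrable M (\<lambda>\<omega>. qf ?P k (?Y \<omega>) (\<Phi> k *v ?Y \<omega>))"
      by (rule qf_int[OF YM PY Y(2) sqint_mat[OF YM Y(2)]])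
    show "integrable M (\<lambda>\<omega>. qf ?P k (?Y \<omega>) (v \<omega>))"
      by (rule qf_int[OF YM vM Y(2)]) (use vv in auto)
    fix \<omega>
    show "qf ?P k (?Y \<omega>) (\<Phi> k *v ?Y \<omega>) \<le> qf ?P k (?Y \<omega>) (v \<omega>)"
      using qf_min[OF k(1), of \<Phi> "?Y \<omega>" "v \<omega>"] opt k(1) Hpsd[OF k(1), of "v \<omega> - \<Phi> k *v ?Y \<omega>" \<Phi>]
      by auto
  qed
  then show "costJ M N A B C D Q R G w k ?Y (\<lambda>l \<omega>. \<Phi> l *v clX A B C D w \<Phi> k ?Y (l - k) \<omega>)
       \<le> costJ M N A B C D Q R G w k ?Y (\<lambda>l \<omega>. if l = k then v \<omega> else \<Phi> l *v pX A B C D w \<Phi> k ?Y v (l - k) \<omega>)"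
    unfolding c1 c2 .
qed

lemma uniqueness:
  fixes \<Phi> \<Psi> :: "nat \<Rightarrow> real^'n^'m"
  assumes opt: "\<forall>k<N. \<Phi> k = optK \<Phi> k" and eq: "is_equilibrium M N A B C D Q R G x0 w \<Psi>"
  shows "\<forall>t<N. \<Psi> t = \<Phi> t"
proof -
  interpret prob_space M by (rule ps)
  have "\<forall>t. N - i \<le> t \<longrightarrow> t < N \<longrightarrow> \<Psi> t = \<Phi> t" for i
  proof (induction i)
    case 0 then show ?case by auto
  next
    case (Suc i)
    show ?case
    proof (intro allI impI)
      fix t assume t1: "N - Suc i \<le> t" and t: "t < N"
      show "\<Psi> t = \<Phi> t"
      proof (cases "N - i \<le> t")
        case True then show ?thesis using Suc.IH t by auto
      next
        case False
        then have later: "\<And>l. t < l \<Longrightarrow> l < N \<Longrightarrow> \<Psi> l = \<Phi> l" using Suc.IH t1 by auto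
        let ?P = "PP \<Phi> t (N - Suc t)"
        have PPe: "PP \<Psi> t (N - Suc t) = ?P"
          by (rule PP_cong) (use later t in auto)
        have "\<Psi> t *v x = \<Phi> t *v x" for x
        proof -
          let ?v = "\<lambda>\<omega>::'w. \<Phi> t *v x"
          have vm: "?v \<in> borel_measurable (Fpre M x0 w t)" by simp
          have vi: "integrable M (\<lambda>\<omega>. (norm (?v \<omega>))\<^sup>2)" by simp
          have Y0: "eqX A B C D w \<Psi> t x (t - t) = (\<lambda>\<omega>. x)" by (rule ext) simp
          have Ym: "(\<lambda>\<omega>::'w. x) \<in> borel_measurable (Fpre M x0 w t)" by simp
          have Yi: "integrable M (\<lambda>\<omega>. (norm ((\<lambda>\<omega>::'w. x) \<omega>))\<^sup>2)" by simp
          have "costJ M N A B C D Q R G w t (eqX A B C D w \<Psi> t x (t - t)) (\<lambda>l \<omega>. \<Psi> l *v clX A B C D w \<Psi> t (eqX A B C D w \<Psi> t x (t - t)) (l - t) \<omega>)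
              \<le> costJ M N A B C D Q R G w t (eqX A B C D w \<Psi> t x (t - t)) (\<lambda>l \<omega>. if l = t then ?v \<omega> else \<Psi> l *v pX A B C D w \<Psi> t (eqX A B C D w \<Psi> t x (t - t)) ?v (l - t) \<omega>)"
            using eq[unfolded is_equilibrium_def Let_def, rule_format, where t=t and x=x and k=t and v="?v"] t vm vi by simp
          then have "costJ M N A B C D Q R G w t (\<lambda>\<omega>. x) (\<lambda>l \<omega>. \<Psi> l *v clX A B C D w \<Psi> t (\<lambda>\<omega>. x) (l - t) \<omega>)
              \<le> costJ M N A B C D Q R G w t (\<lambda>\<omega>. x) (\<lambda>l \<omega>. if l = t then ?v \<omega> else \<Psi> l *v pX A B C D w \<Psi> t (\<lambda>\<omega>. x) ?v (l - t) \<omega>)"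
            by (simp only: Y0)
          then have "qf ?P t x (\<Psi> t *v x) \<le> qf ?P t x (\<Phi> t *v x)"
            unfolding cost_phi[OF t Ym Yi] cost_v[OF t Ym Yi vm vi] PP_qf[OF t] PPe
            by (simp add: prob_space)
          moreover have "qf ?P t x (\<Psi> t *v x) - qf ?P t x (\<Phi> t *v x)
             = (\<Psi> t *v x - \<Phi> t *v x) \<bullet> (Hm ?P t *v (\<Psi> t *v x - \<Phi> t *v x))"
            by (rule qf_min) (use opt t in auto)
          ultimately have h: "(\<Psi> t *v x - \<Phi> t *v x) \<bullet> (Hm ?P t *v (\<Psi> t *v x - \<Phi> t *v x)) \<le> 0" by simp
          have ps: "psd_mat ?P" using PP_psd[OF t, of "N - Suc t" \<Phi>] by auto
          have "\<Psi> t *v x - \<Phi> t *v x = 0"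
          proof (rule ccontr)
            assume "\<Psi> t *v x - \<Phi> t *v x \<noteq> 0"
            from Hm_pd[OF t ps this] h show False by simp
          qed
          then show ?thesis by simp
        qed
        then show ?thesis by (simp add: matrix_eq)
      qed
    qed
  qed
  from this[of N] show ?thesis by auto
qed

theorem main: "\<exists>\<Phi>. is_equilibrium M N A B C D Q R G x0 w \<Phi> \<and>
             (\<forall>\<Psi>. is_equilibrium M N A B C D Q R G x0 w \<Psi> \<longrightarrow> (\<forall>t<N. \<Psi> t = \<Phi> t))"
proof -
  obtain \<Phi> where opt: "\<forall>k<N. \<Phi> k = optK \<Phi> k" using exists_opt by blast
  show ?thesis using existence[OF opt] uniqueness[OF opt] by blast
qed

end

theorem corollary3p1:
  fixes M :: "'w measure" and N :: nat and x0 :: "'w \<Rightarrow> real^'n" and w :: "nat \<Rightarrow> 'w \<Rightarrow> real"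
    and A C :: "nat \<Rightarrow> nat \<Rightarrow> real^'n^'n" and B D :: "nat \<Rightarrow> nat \<Rightarrow> real^'m^'n"
    and Q :: "nat \<Rightarrow> nat \<Rightarrow> real^'n^'n" and R :: "nat \<Rightarrow> nat \<Rightarrow> real^'m^'m"
    and G :: "nat \<Rightarrow> real^'n^'n"
  assumes "prob_space M" and "0 < N"
    and "x0 \<in> borel_measurable M"
    and "\<forall>k. w k \<in> borel_measurable M"
    and "\<forall>k. integrable M (w k)"
    and "\<forall>k. integrable M (\<lambda>\<omega>. (w k \<omega>)\<^sup>2)"
    and "\<forall>k. AE \<omega> in M. real_cond_exp M (Fpre M x0 w k) (w k) \<omega> = 0"
    and "\<forall>k. AE \<omega> in M. real_cond_exp M (Fpre M x0 w k) (\<lambda>\<omega>. (w k \<omega>)\<^sup>2) \<omega> = 1"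
    and "\<forall>t<N. \<forall>k\<in>{t..<N}. transpose (Q t k) = Q t k \<and> transpose (R t k) = R t k
                            \<and> psd_mat (Q t k) \<and> pd_mat (R t k)"
    and "\<forall>t<N. transpose (G t) = G t \<and> psd_mat (G t)"
  shows "\<exists>\<Phi>. is_equilibrium M N A B C D Q R G x0 w \<Phi> \<and>
             (\<forall>\<Psi>. is_equilibrium M N A B C D Q R G x0 w \<Psi> \<longrightarrow> (\<forall>t<N. \<Psi> t = \<Phi> t))"
  proof -
  have L: "lq M N x0 w Q R G"
    unfolding lq_def lqs_def lq_axioms_def using assms by auto
  interpret lq M N x0 w A C B D Q R G by (rule L)
  show ?thesis by (rule main)
qed

end
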